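(* Let $A\subseteq2^{\mathbb N}$ be an analytic set containing no eventually constant sequence. Then there is a continuous map $H:2^{\mathbb N}\to[\mathbb N]$ with $H^{-1}(\mathcal L_A)=2^{\mathbb N}\setminus A$ (i.e. $2^{\mathbb N}\setminus A$ is Wadge reducible to $\mathcal L_A$). In particular, if $A$ is $\mathbf\Sigma^1_1$-complete then $\mathcal L_A$ is $\mathbf\Pi^1_1$-complete. Moreover, if $A$ is Borel then $\mathcal L_A$ is Borel.
   Context: Let $\leqslant$ be the lexicographical order on $2^{\mathbb N}$ and $<$ its strict part. For $x\in2^{\mathbb N}$ let $f^+_x=\chi_{\{y:x\leqslant y\}}$ and $f^-_x=\chi_{\{y:x<y\}}$ (functions on $2^{\mathbb N}$). Fix a bijection $h:2^{<\mathbb N}\to\mathbb N$ with $h(s)<h(t)$ whenever $|s|<|t|$, and let $(s_n)_n$ be the enumeration of $2^{<\mathbb N}$ given by $s_n=h^{-1}(n)$. For $s\in2^{<\mathbb N}$ let $x^0_s=s^\frown0^\infty$ and $x^1_s=s^\frown1^\infty$. Define $f_{4n}=f^+_{x^0_{s_n}}$, $f_{4n+1}=f^+_{x^1_{s_n}}$, $f_{4n+2}=f^-_{x^0_{s_n}}$, $f_{4n+3}=f^-_{x^1_{s_n}}$. $[\mathbb N]$ is the set of infinite subsets of $\mathbb N$ (Polish subspace of $2^{\mathbb N}$), and $\mathcal L_A=\{L\in[\mathbb N]:(f_n|_A)_{n\in L}\text{ converges pointwise on }A\}$. A set is $\mathbf\Sigma^1_1$-complete (resp. $\mathbf\Pi^1_1$-complete)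 if it is $\mathbf\Sigma^1_1$ (resp. $\mathbf\Pi^1_1$) and every $\mathbf\Sigma^1_1$ (resp. $\mathbf\Pi^1_1$) subset of a Polish space is Borel reducible to it. *)

theory Defs
  imports "HOL-Analysis.Analysis" "HOL-Library.Infinite_Set"
begin

text \<open>Cantor space is modelled as the type nat \<Rightarrow> bool with the product topology;
  the space [N] of infinite subsets of N is the subspace of characteristic functions
  of infinite sets.\<close>

definition infsets :: "(nat \<Rightarrow> bool) set" where
  "infsets = {L. infinite {n. L n}}"

definition analytic :: "'a::topological_space set \<Rightarrow> bool" where
  "analytic A \<longleftrightarrow> A = {} \<or> (\<exists>f :: (nat \<Rightarrow> nat) \<Rightarrow> 'a. continuous_on UNIV f \<and> range f = A)"

definition sigma11_complete :: "'b::polish_space itself \<Rightarrow> 'a::topological_space set \<Rightarrow> bool" where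
  "sigma11_complete _ A \<longleftrightarrow> analytic A \<and>
     (\<forall>B :: 'b set. analytic B \<longrightarrow>
        (\<exists>f :: 'b \<Rightarrow> 'a. f \<in> borel_measurable borel \<and> f -` A = B))"

definition pi11_complete :: "'b::polish_space itself \<Rightarrow> 'a::topological_space set \<Rightarrow> 'a set \<Rightarrow> bool" where
  "pi11_complete _ S C \<longleftrightarrow> C \<subseteq> S \<and> analytic (S - C) \<and>
     (\<forall>B :: 'b set. analytic (- B) \<longrightarrow>
        (\<exists>f :: 'b \<Rightarrow> 'a. f \<in> borel_measurable borel \<and> (\<forall>y. f y \<in> S) \<and> f -` C = B))"

definition lex_less :: "(nat \<Rightarrow> bool) \<Rightarrow> (nat \<Rightarrow> bool) \<Rightarrow> bool" where
  "lex_less x y \<longleftrightarrow> (\<exists>n. (\<forall>m<n. x m = y m) \<and> \<not> x n \<and> y n)"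

definition lex_le :: "(nat \<Rightarrow> bool) \<Rightarrow> (nat \<Rightarrow> bool) \<Rightarrow> bool" where
  "lex_le x y \<longleftrightarrow> x = y \<or> lex_less x y"

definition fplus :: "(nat \<Rightarrow> bool) \<Rightarrow> (nat \<Rightarrow> bool) \<Rightarrow> real" where
  "fplus x = (\<lambda>y. if lex_le x y then 1 else 0)"

definition fminus :: "(nat \<Rightarrow> bool) \<Rightarrow> (nat \<Rightarrow> bool) \<Rightarrow> real" where
  "fminus x = (\<lambda>y. if lex_less x y then 1 else 0)"

definition xzero :: "bool list \<Rightarrow> nat \<Rightarrow> bool" where
  "xzero s = (\<lambda>n. if n < length s then s ! n else False)"

definition xone :: "bool list \<Rightarrow> nat \<Rightarrow> bool" where
  "xone s = (\<lambda>n. if n < length s then s ! n else True)"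

definition fseq :: "(bool list \<Rightarrow> nat) \<Rightarrow> nat \<Rightarrow> (nat \<Rightarrow> bool) \<Rightarrow> real" where
  "fseq h n = (let s = inv h (n div 4) in
     if n mod 4 = 0 then fplus (xzero s)
     else if n mod 4 = 1 then fplus (xone s)
     else if n mod 4 = 2 then fminus (xzero s)
     else fminus (xone s))"

definition LA :: "(bool list \<Rightarrow> nat) \<Rightarrow> (nat \<Rightarrow> bool) set \<Rightarrow> (nat \<Rightarrow> bool) set" where
  "LA h A = {L \<in> infsets. \<forall>a\<in>A. convergent (\<lambda>k. fseq h (enumerate {n. L n} k) a)}"

definition eventually_constant :: "(nat \<Rightarrow> bool) \<Rightarrow> bool" where
  "eventually_constant x \<longleftrightarrow> (\<exists>N c. \<forall>n\<ge>N. x n = c)"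

end

theory Submission
  imports Defs
begin


definition fdiff :: "(nat \<Rightarrow> bool) \<Rightarrow> (nat \<Rightarrow> bool) \<Rightarrow> nat" where
  "fdiff x y = (LEAST i. x i \<noteq> y i)"

lemma fdiff: assumes "x \<noteq> y"
  shows "\<forall>m<fdiff x y. x m = y m" "x (fdiff x y) \<noteq> y (fdiff x y)"
proof -
  from assms obtain i where "x i \<noteq> y i" by auto
  then show "x (fdiff x y) \<noteq> y (fdiff x y)" unfolding fdiff_def by (rule LeastI)
  show "\<forall>m<fdiff x y. x m = y m" unfolding fdiff_def using not_less_Least by blast
qed

lemma fdiff_unique: assumes "\<forall>m<d. x m = y m" "x d \<noteq> y d" shows "fdiff x y = d"
proof -
  have xy: "x \<noteq> y" using assms by auto
  show ?thesis using fdiff[OF xy] assms by (metis linorder_neqE_nat)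
qed

lemma lex_less_fdiff: "lex_less x y \<longleftrightarrow> x \<noteq> y \<and> \<not> x (fdiff x y) \<and> y (fdiff x y)"
proof
  assume "lex_less x y"
  then obtain n where n: "\<forall>m<n. x m = y m" "\<not> x n" "y n" unfolding lex_less_def by auto
  then have "fdiff x y = n" by (intro fdiff_unique) auto
  with n show "x \<noteq> y \<and> \<not> x (fdiff x y) \<and> y (fdiff x y)" by auto
next
  assume "x \<noteq> y \<and> \<not> x (fdiff x y) \<and> y (fdiff x y)"
  then show "lex_less x y" unfolding lex_less_def using fdiff by blast
qed

lemma lex_less_irrefl: "\<not> lex_less x x"
  unfolding lex_less_def by auto

lemma lex_less_trans: assumes "lex_less x y" "lex_less y z" shows "lex_less x z"
proof -
  from assms obtain n k where n: "\<forall>m<n. x m = y m" "\<not> x n" "y n"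
    and k: "\<forall>m<k. y m = z m" "\<not> y k" "z k" unfolding lex_less_def by blast
  show ?thesis unfolding lex_less_def
  proof (cases n k rule: linorder_cases)
    case less
    have "x m = z m" if "m<n" for m using n(1) k(1) that less by (metis order.strict_trans)
    moreover have "z n" using k(1) less n(3) by metis
    ultimately show "\<exists>n. (\<forall>m<n. x m = z m) \<and> \<not> x n \<and> z n" using n(2) by blast
  next
    case equal then show "\<exists>n. (\<forall>m<n. x m = z m) \<and> \<not> x n \<and> z n" using n k by blast
  next
    case greater
    have "x m = z m" if "m<k" for m using n(1) k(1) that greater by (metis order.strict_trans)
    moreover have "\<not> x k" using n(1) greater k(2) by metis
    ultimately show "\<exists>n. (\<forall>m<n. x m = z m) \<and> \<not> x n \<and> z n" using k(3) by blast
  qed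
qed

lemma lex_less_asym: "lex_less x y \<Longrightarrow> \<not> lex_less y x"
  using lex_less_trans lex_less_irrefl by blast

lemma lex_trich: assumes "x \<noteq> y" shows "lex_less x y \<or> lex_less y x"
proof -
  let ?d = "fdiff x y"
  have a: "\<forall>m<?d. x m = y m" "x ?d \<noteq> y ?d" using fdiff[OF assms] by auto
  have b: "\<forall>m<?d. y m = x m" using a(1) by simp
  show ?thesis
  proof (cases "x ?d")
    case True then show ?thesis using a b unfolding lex_less_def by blast
  next
    case False then show ?thesis using a b unfolding lex_less_def by blast
  qed
qed

lemma lex_le_trans1: "lex_less x y \<Longrightarrow> lex_le y z \<Longrightarrow> lex_less x z"
  unfolding lex_le_def using lex_less_trans by blast
lemma lex_le_trans2: "lex_le x y \<Longrightarrow> lex_less y z \<Longrightarrow> lex_less x z"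
  unfolding lex_le_def using lex_less_trans by blast

lemma open_cyl: "open {b::nat\<Rightarrow>'a::discrete_topology. \<forall>i<N. b i = a i}"
proof -
  have "{b::nat\<Rightarrow>'a. \<forall>i<N. b i = a i} = (\<Inter>i\<in>{..<N}. (\<lambda>b. b i) -` {a i})" by auto
  also have "open \<dots>"
    by (intro open_INT finite_lessThan ballI, rule open_vimage[OF _ continuous_on_product_coordinates])
       (simp add: open_discrete)
  finally show ?thesis .
qed

lemma lc_cont:
  assumes "\<And>x. \<exists>U. open U \<and> x \<in> U \<and> (\<forall>y\<in>U. g y = g x)"
  shows "continuous_on UNIV g"
proof -
  have "open (g -` B)" if B: "open B" for B
  proof (subst open_subopen, intro ballI)
    fix x assume x: "x \<in> g -` B"
    from assms[of x] obtain U where U: "open U" "x \<in> U" "\<forall>y\<in>U. g y = g x" by blast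
    have "U \<subseteq> g -` B" using U(3) x by auto
    then show "\<exists>T. open T \<and> x \<in> T \<and> T \<subseteq> g -` B" using U by blast
  qed
  then show ?thesis by (simp add: continuous_on_open_vimage[OF open_UNIV])
qed


definition pre :: "(nat \<Rightarrow> bool) \<Rightarrow> nat \<Rightarrow> bool list" where
  "pre x k = map x [0..<k]"

lemma length_pre[simp]: "length (pre x k) = k" unfolding pre_def by simp

lemma xzero_pre: "i < k \<Longrightarrow> xzero (pre x k) i = x i"
  and xone_pre: "i < k \<Longrightarrow> xone (pre x k) i = x i"
  unfolding xzero_def xone_def pre_def by auto

lemma pre_eq: "(\<forall>i<k. y i = x i) \<Longrightarrow> pre y k = pre x k"
  unfolding pre_def by auto

lemma inj_pre: "inj (pre x)"
  by (rule injI) (metis length_pre)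

lemma le_tail0: assumes "\<forall>i<k. y i = x i" "\<forall>i\<ge>k. \<not> y i" shows "lex_le y x"
proof (cases "y = x")
  case False
  have d: "\<forall>m<fdiff y x. y m = x m" "y (fdiff y x) \<noteq> x (fdiff y x)" using fdiff[OF False] by auto
  have "fdiff y x \<ge> k" using d(2) assms(1) by (meson not_le)
  then have "\<not> y (fdiff y x)" using assms(2) by blast
  then show ?thesis unfolding lex_le_def lex_less_def using d by blast
qed (simp add: lex_le_def)

lemma le_tail1: assumes "\<forall>i<k. y i = x i" "\<forall>i\<ge>k. y i" shows "lex_le x y"
proof (cases "y = x")
  case False
  then have F: "x \<noteq> y" by auto
  have d: "\<forall>m<fdiff x y. x m = y m" "x (fdiff x y) \<noteq> y (fdiff x y)" using fdiff[OF F] by auto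
  have "fdiff x y \<ge> k" using d(2) assms(1) by (metis not_le)
  then have "y (fdiff x y)" using assms(2) by blast
  then show ?thesis unfolding lex_le_def lex_less_def using d by blast
qed (simp add: lex_le_def)

lemma xzero_pre_le: "lex_le (xzero (pre x k)) x"
  by (rule le_tail0[of k]) (auto simp: xzero_pre, auto simp: xzero_def)

lemma xone_pre_le: "lex_le x (xone (pre x k))"
  by (rule le_tail1[of k]) (auto simp: xone_pre, auto simp: xone_def)

lemma not_ev_const: "\<not> eventually_constant x \<Longrightarrow> \<exists>n\<ge>k. x n = c"
  unfolding eventually_constant_def by blast

lemma xone_pre_less: assumes "\<not> eventually_constant x" shows "lex_less x (xone (pre x k))"
proof -
  obtain n where "n \<ge> k" "\<not> x n" using not_ev_const[OF assms, of k False] by auto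
  moreover have "xone (pre x k) n" using \<open>n \<ge> k\<close> by (simp add: xone_def)
  ultimately have "x \<noteq> xone (pre x k)" by metis
  then show ?thesis using xone_pre_le[of x k] unfolding lex_le_def by auto
qed

lemma xzero_pre_less: assumes "\<not> eventually_constant x" shows "lex_less (xzero (pre x k)) x"
proof -
  obtain n where "n \<ge> k" "x n" using not_ev_const[OF assms, of k True] by auto
  moreover have "\<not> xzero (pre x k) n" using \<open>n \<ge> k\<close> by (simp add: xzero_def)
  ultimately have "xzero (pre x k) \<noteq> x" by metis
  then show ?thesis using xzero_pre_le[of x k] unfolding lex_le_def by auto
qed

lemma cyl_lex:
  assumes "x \<noteq> a" "\<forall>i\<le>fdiff x a. y i = x i"
  shows "y \<noteq> a" "lex_less y a \<longleftrightarrow> lex_less x a" "lex_less a y \<longleftrightarrow> lex_less a x"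
proof -
  let ?d = "fdiff x a"
  have d: "\<forall>m<?d. x m = a m" "x ?d \<noteq> a ?d" using fdiff[OF assms(1)] by auto
  have yd: "\<forall>m<?d. y m = a m" "y ?d \<noteq> a ?d" using d assms(2) by auto
  then show ya: "y \<noteq> a" by auto
  have f1: "fdiff y a = ?d" using yd by (rule fdiff_unique)
  have ax: "a \<noteq> x" "a \<noteq> y" using assms(1) ya by auto
  have f2: "fdiff a x = ?d" using d by (intro fdiff_unique) auto
  have f3: "fdiff a y = ?d" using yd by (intro fdiff_unique) auto
  have yx: "y ?d = x ?d" using assms(2) by auto
  show "lex_less y a \<longleftrightarrow> lex_less x a"
    unfolding lex_less_fdiff using f1 yx ya assms(1) by simp
  show "lex_less a y \<longleftrightarrow> lex_less a x"
    unfolding lex_less_fdiff using f2 f3 yx ax by simp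
qed

lemma conv_ev:
  fixes g :: "nat \<Rightarrow> real"
  assumes "infinite S" "\<forall>n\<in>S. n > B \<longrightarrow> g n = b"
  shows "convergent (\<lambda>k. g (enumerate S k))"
proof -
  have "eventually (\<lambda>k. g (enumerate S k) = b) sequentially"
  proof (rule eventually_sequentiallyI[of "Suc B"])
    fix k assume "Suc B \<le> k"
    then have "enumerate S k > B" using le_enumerate[OF assms(1), of k] by simp
    then show "g (enumerate S k) = b" using assms enumerate_in_set by blast
  qed
  then have "(\<lambda>k. g (enumerate S k)) \<longlonglongrightarrow> b" by (rule tendsto_eventually)
  then show ?thesis unfolding convergent_def by blast
qed

lemma nonconv:
  fixes g :: "nat \<Rightarrow> real"
  assumes S: "infinite S" and i1: "infinite {n\<in>S. g n = 1}" and i0: "infinite {n\<in>S. g n = 0}"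
  shows "\<not> convergent (\<lambda>k. g (enumerate S k))"
proof
  assume "convergent (\<lambda>k. g (enumerate S k))"
  then obtain l where lim: "(\<lambda>k. g (enumerate S k)) \<longlonglongrightarrow> l" unfolding convergent_def by blast
  have "eventually (\<lambda>k. dist (g (enumerate S k)) l < 1/2) sequentially"
    using tendstoD[OF lim, of "1/2"] by simp
  then obtain K where K0: "\<forall>k\<ge>K. dist (g (enumerate S k)) l < 1/2"
    unfolding eventually_sequentially by (elim exE)
  have K: "dist (g (enumerate S k)) l < 1/2" if "k \<ge> K" for k using K0 that by simp
  have hit: "\<exists>k\<ge>K. g (enumerate S k) = c" if "infinite {n\<in>S. g n = c}" for c
  proof -
    have "\<exists>n>enumerate S K. n \<in> {n\<in>S. g n = c}"
      using that unfolding infinite_nat_iff_unbounded by (elim allE)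
    then obtain n where n: "n > enumerate S K" "n \<in> {n\<in>S. g n = c}" by (elim exE conjE) 
    obtain j where j: "enumerate S j = n" using enumerate_Ex[OF S] n by blast
    then have "enumerate S K < enumerate S j" using n(1) by simp
    then have "j > K" using enumerate_mono_iff[OF S] by blast
    then show ?thesis using j n by (intro exI[of _ j]) auto
  qed
  obtain k1 where k1: "k1 \<ge> K" "g (enumerate S k1) = 1" using hit[OF i1] by blast
  have a: "dist 1 l < 1/2" using K[OF k1(1)] k1(2) by simp
  obtain k0 where k0: "k0 \<ge> K" "g (enumerate S k0) = 0" using hit[OF i0] by blast
  have b: "dist 0 l < 1/2" using K[OF k0(1)] k0(2) by simp
  have "\<bar>1 - l\<bar> < 1/2" "\<bar>0 - l\<bar> < 1/2" using a b by (simp_all only: dist_real_def)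
  then show False by linarith
qed

lemma div4[simp]:
  "Suc (4*m) div 4 = m" "Suc (4*m) mod 4 = 1"
  "Suc (Suc (4*m)) div 4 = m" "Suc (Suc (4*m)) mod 4 = 2"
  "Suc (Suc (Suc (4*m))) div 4 = m" "Suc (Suc (Suc (4*m))) mod 4 = 3"
  by presburger+

lemma fseq_4:
  "fseq h (4*m) = fplus (xzero (inv h m))"
  "fseq h (Suc (4*m)) = fplus (xone (inv h m))"
  "fseq h (Suc (Suc (4*m))) = fminus (xzero (inv h m))"
  "fseq h (Suc (Suc (Suc (4*m)))) = fminus (xone (inv h m))"
  unfolding fseq_def Let_def by auto

definition Hmap :: "(bool list \<Rightarrow> nat) \<Rightarrow> (nat \<Rightarrow> bool) \<Rightarrow> nat \<Rightarrow> bool" where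
  "Hmap h x n = (n mod 4 < 2 \<and> pre x (length (inv h (n div 4))) = inv h (n div 4))"

lemma Hmap_cont: "continuous_on UNIV (Hmap h)"
proof (rule continuous_on_coordinatewise_then_product, rule lc_cont)
  fix n x
  let ?N = "length (inv h (n div 4))"
  show "\<exists>U. open U \<and> x \<in> U \<and> (\<forall>y\<in>U. Hmap h y n = Hmap h x n)"
  proof (rule exI[of _ "{b. \<forall>i<?N. b i = x i}"], intro conjI ballI)
    fix y assume "y \<in> {b. \<forall>i<?N. b i = x i}"
    then have "pre y ?N = pre x ?N" by (intro pre_eq) auto
    then show "Hmap h y n = Hmap h x n" unfolding Hmap_def by simp
  qed (auto simp: open_cyl)
qed

context
  fixes h :: "bool list \<Rightarrow> nat"
  assumes bh: "bij h"
begin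

lemma ih: "inv h (h s) = s" using bh by (simp add: bij_is_inj)
lemma hi: "h (inv h m) = m" using bh by (simp add: bij_is_surj surj_f_inv_f)

lemma Hmap_in0: "Hmap h x (4 * h (pre x k))" and Hmap_in1: "Hmap h x (4 * h (pre x k) + 1)"
  unfolding Hmap_def by (auto simp: ih)

lemma Hmap_cases: assumes "Hmap h x n"
  shows "\<exists>k. n = 4 * h (pre x k) \<or> n = 4 * h (pre x k) + 1"
proof -
  let ?s = "inv h (n div 4)"
  have e: "pre x (length ?s) = ?s" "n mod 4 < 2" using assms unfolding Hmap_def by auto
  have "h (pre x (length ?s)) = n div 4" using e hi by simp
  then have "n = 4 * h (pre x (length ?s)) + n mod 4" by simp
  moreover have "n mod 4 = 0 \<or> n mod 4 = 1" using e(2) by linarith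
  ultimately show ?thesis by (elim disjE) (metis add.right_neutral, metis)
qed

lemma inj_h4: "inj (\<lambda>k. 4 * h (pre x k) + c)"
proof (rule injI)
  fix a b assume "4 * h (pre x a) + c = 4 * h (pre x b) + c"
  then have "h (pre x a) = h (pre x b)" by simp
  then have "pre x a = pre x b" using bij_is_inj[OF bh] by (simp add: inj_eq)
  then show "a = b" by (metis length_pre)
qed

lemma Hmap_inf: "Hmap h x \<in> infsets"
proof -
  have "range (\<lambda>k. 4 * h (pre x k) + 0) \<subseteq> {n. Hmap h x n}" using Hmap_in0 by auto
  then show ?thesis unfolding infsets_def using inj_h4 infinite_iff_countable_subset by blast
qed

lemma Hmap_inA: assumes "\<not> eventually_constant x"
  shows "\<not> convergent (\<lambda>k. fseq h (enumerate {n. Hmap h x n} k) x)"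
proof (rule nonconv)
  show "infinite {n. Hmap h x n}" using Hmap_inf unfolding infsets_def by auto
  have "range (\<lambda>k. 4 * h (pre x k) + 0) \<subseteq> {n \<in> {n. Hmap h x n}. fseq h n x = 1}"
    using Hmap_in0 xzero_pre_le by (auto simp: fseq_4 ih fplus_def)
  then show "infinite {n \<in> {n. Hmap h x n}. fseq h n x = 1}"
    using inj_h4 infinite_iff_countable_subset by blast
  have "range (\<lambda>k. 4 * h (pre x k) + 1) \<subseteq> {n \<in> {n. Hmap h x n}. fseq h n x = 0}"
  proof -
    have "fseq h (4 * h (pre x k) + 1) x = 0" for k
    proof -
      have l: "lex_less x (xone (pre x k))" using xone_pre_less[OF assms] by blast
      have "xone (pre x k) \<noteq> x" using l lex_less_irrefl by force
      moreover have "\<not> lex_less (xone (pre x k)) x" using l lex_less_asym by blast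
      ultimately have "\<not> lex_le (xone (pre x k)) x" unfolding lex_le_def by blast
      then show ?thesis by (simp add: fseq_4 ih fplus_def)
    qed
    then show ?thesis using Hmap_in1 by blast
  qed
  then show "infinite {n \<in> {n. Hmap h x n}. fseq h n x = 0}"
    using inj_h4 infinite_iff_countable_subset by blast
qed

lemma Hmap_notA: assumes "a \<noteq> x"
  shows "convergent (\<lambda>k. fseq h (enumerate {n. Hmap h x n} k) a)"
proof -
  have xa: "x \<noteq> a" using assms by auto
  let ?d = "fdiff x a"
  define B where "B = Max ((\<lambda>k. 4 * h (pre x k) + 1) ` {..?d})"
  have key: "fplus y a = (if lex_less x a then 1 else 0)" if "\<forall>i<k. y i = x i" "k > ?d" for y k
  proof -
    have "\<forall>i\<le>?d. y i = x i" using that by auto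
    from cyl_lex[OF xa this] show ?thesis unfolding fplus_def lex_le_def by auto
  qed
  show ?thesis
  proof (rule conv_ev[where B = B])
    show "infinite {n. Hmap h x n}" using Hmap_inf unfolding infsets_def by auto
    show "\<forall>n\<in>{n. Hmap h x n}. B < n \<longrightarrow> fseq h n a = (if lex_less x a then 1 else 0)"
    proof (intro ballI impI)
      fix n assume n: "n \<in> {n. Hmap h x n}" "B < n"
      have small: "k > ?d" if "n \<le> 4 * h (pre x k) + 1" for k
      proof (rule ccontr)
        assume "\<not> k > ?d"
        then have "4 * h (pre x k) + 1 \<le> B" unfolding B_def by (intro Max_ge) auto
        then show False using that n(2) by simp
      qed
      obtain k where "n = 4 * h (pre x k) \<or> n = 4 * h (pre x k) + 1" using Hmap_cases n(1) by auto
      then show "fseq h n a = (if lex_less x a then 1 else 0)"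
      proof
        assume 1: "n = 4 * h (pre x k)"
        then have "k > ?d" using small[of k] by simp
        then show ?thesis using 1 key[of k "xzero (pre x k)"] by (simp add: fseq_4 ih xzero_pre)
      next
        assume 2: "n = 4 * h (pre x k) + 1"
        then have "k > ?d" using small[of k] by simp
        then show ?thesis using 2 key[of k "xone (pre x k)"] by (simp add: fseq_4 ih xone_pre)
      qed
    qed
  qed
qed

lemma part1:
  assumes "\<forall>x\<in>A. \<not> eventually_constant x"
  shows "continuous_on UNIV (Hmap h) \<and> (\<forall>x. Hmap h x \<in> infsets) \<and> Hmap h -` LA h A = - A"
proof (intro conjI allI)
  show "continuous_on UNIV (Hmap h)" by (rule Hmap_cont)
  show "Hmap h x \<in> infsets" for x by (rule Hmap_inf)
  show "Hmap h -` LA h A = - A"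
  proof (intro equalityI subsetI)
    fix x assume "x \<in> Hmap h -` LA h A"
    then have "\<forall>a\<in>A. convergent (\<lambda>k. fseq h (enumerate {n. Hmap h x n} k) a)"
      unfolding LA_def by auto
    then show "x \<in> - A" using Hmap_inA assms by blast
  next
    fix x assume "x \<in> - A"
    then have "\<forall>a\<in>A. a \<noteq> x" by auto
    then show "x \<in> Hmap h -` LA h A" unfolding LA_def using Hmap_inf Hmap_notA by blast
  qed
qed

end


instance bool :: second_countable_topology
proof
  show "\<exists>B::bool set set. countable B \<and> open = generate_topology B"
    by (intro exI[of _ UNIV]) (auto intro!: ext simp: open_discrete intro: generate_topology.Basis)
qed

lemma pc[measurable]: "Measurable.pred borel (\<lambda>L::nat\<Rightarrow>bool. L n)"
proof -
  have "{L::nat\<Rightarrow>bool. L n} = (\<lambda>L. L n) -` {True}" by auto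
  also have "open \<dots>" by (rule open_vimage[OF _ continuous_on_product_coordinates]) (simp add: open_discrete)
  finally show ?thesis unfolding pred_def by simp
qed

lemma meas_coord:
  assumes "\<And>n. Measurable.pred borel (\<lambda>L. m L n)"
  shows "(m::(nat\<Rightarrow>bool)\<Rightarrow>nat\<Rightarrow>bool) \<in> borel_measurable borel"
proof (rule measurable_coordinatewise_then_product)
  fix n
  have e: "measurable borel (borel::bool measure) = measurable borel (count_space UNIV)"
    by (rule measurable_cong_sets[OF refl sets_borel_eq_count_space])
  show "(\<lambda>x. m x n) \<in> borel_measurable borel" unfolding e using assms[of n] by simp
qed

definition pt :: "(bool list \<Rightarrow> nat) \<Rightarrow> nat \<Rightarrow> nat \<Rightarrow> bool" where
  "pt h n = (let s = inv h (n div 4) in if n mod 4 = 0 \<or> n mod 4 = 2 then xzero s else xone s)"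

lemma evc_xzero: "eventually_constant (xzero s)"
  unfolding eventually_constant_def xzero_def by (intro exI[of _ "length s"] exI[of _ False]) auto
lemma evc_xone: "eventually_constant (xone s)"
  unfolding eventually_constant_def xone_def by (intro exI[of _ "length s"] exI[of _ True]) auto

lemma evc_pt: "eventually_constant (pt h n)"
  unfolding pt_def Let_def using evc_xzero evc_xone by auto

lemma fseq_pt': assumes ne: "pt h n \<noteq> a"
  shows "fseq h n a = (if lex_less (pt h n) a then 1 else 0)"
proof -
  have m: "n mod 4 = 0 \<or> n mod 4 = 1 \<or> n mod 4 = 2 \<or> n mod 4 = 3" by linarith
  have fs: "fseq h n a = (if n mod 4 = 0 \<or> n mod 4 = 1 then fplus (pt h n) a else fminus (pt h n) a)"
    using m unfolding fseq_def pt_def Let_def by auto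
  have le: "lex_le (pt h n) a = lex_less (pt h n) a" using ne unfolding lex_le_def by simp
  show ?thesis by (simp add: fs fplus_def fminus_def le)
qed

lemma fseq_pt: assumes "\<not> eventually_constant a"
  shows "fseq h n a = (if lex_less (pt h n) a then 1 else 0)"
  using fseq_pt'[of h n a] evc_pt assms by metis

definition U :: "(bool list \<Rightarrow> nat) \<Rightarrow> (nat \<Rightarrow> bool) \<Rightarrow> (nat \<Rightarrow> bool) \<Rightarrow> bool" where
  "U h L a \<longleftrightarrow> infinite {n. L n \<and> lex_less (pt h n) a}"
definition V :: "(bool list \<Rightarrow> nat) \<Rightarrow> (nat \<Rightarrow> bool) \<Rightarrow> (nat \<Rightarrow> bool) \<Rightarrow> bool" where
  "V h L a \<longleftrightarrow> infinite {n. L n \<and> lex_less a (pt h n)}"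

lemma conv_iff:
  assumes L: "L \<in> infsets" and a: "\<not> eventually_constant a"
  shows "convergent (\<lambda>k. fseq h (enumerate {n. L n} k) a) \<longleftrightarrow> \<not> (U h L a \<and> V h L a)"
proof
  have S: "infinite {n. L n}" using L unfolding infsets_def by auto
  assume c: "convergent (\<lambda>k. fseq h (enumerate {n. L n} k) a)"
  show "\<not> (U h L a \<and> V h L a)"
  proof
    assume uv: "U h L a \<and> V h L a"
    have "{n. L n \<and> lex_less (pt h n) a} \<subseteq> {n \<in> {n. L n}. fseq h n a = 1}"
      using fseq_pt[OF a] by auto
    then have i1: "infinite {n \<in> {n. L n}. fseq h n a = 1}" using uv unfolding U_def
      using infinite_super by blast
    have "{n. L n \<and> lex_less a (pt h n)} \<subseteq> {n \<in> {n. L n}. fseq h n a = 0}"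
      using fseq_pt[OF a] lex_less_asym by fastforce
    then have i0: "infinite {n \<in> {n. L n}. fseq h n a = 0}" using uv unfolding V_def
      using infinite_super by blast
    show False using nonconv[OF S i1 i0] c by blast
  qed
next
  have S: "infinite {n. L n}" using L unfolding infsets_def by auto
  assume nuv: "\<not> (U h L a \<and> V h L a)"
  show "convergent (\<lambda>k. fseq h (enumerate {n. L n} k) a)"
  proof (cases "U h L a")
    case False
    then have "finite {n. L n \<and> lex_less (pt h n) a}" unfolding U_def by simp
    then obtain B where B: "\<forall>n\<in>{n. L n \<and> lex_less (pt h n) a}. n \<le> B"
      unfolding finite_nat_set_iff_bounded_le by blast
    show ?thesis
    proof (rule conv_ev[OF S, where B = B and b = 0], intro ballI impI)
      fix n assume "n \<in> {n. L n}" "B < n"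
      then have "\<not> lex_less (pt h n) a" using B by fastforce
      then show "fseq h n a = 0" using fseq_pt[OF a] by simp
    qed
  next
    case True
    then have "\<not> V h L a" using nuv by blast
    then have "finite {n. L n \<and> lex_less a (pt h n)}" unfolding V_def by simp
    then obtain B where B: "\<forall>n\<in>{n. L n \<and> lex_less a (pt h n)}. n \<le> B"
      unfolding finite_nat_set_iff_bounded_le by blast
    show ?thesis
    proof (rule conv_ev[OF S, where B = B and b = 1], intro ballI impI)
      fix n assume "n \<in> {n. L n}" "B < n"
      then have "\<not> lex_less a (pt h n)" using B by fastforce
      moreover have "pt h n \<noteq> a" using evc_pt a by metis
      ultimately have "lex_less (pt h n) a" using lex_trich by blast
      then show "fseq h n a = 1" using fseq_pt[OF a] by simp
    qed
  qed
qed

lemma U_up: "U h L a \<Longrightarrow> lex_le a b \<Longrightarrow> U h L b"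
  unfolding U_def by (rule infinite_super[rotated]) (auto intro: lex_less_trans lex_le_trans1)
lemma V_down: "V h L b \<Longrightarrow> lex_le a b \<Longrightarrow> V h L a"
  unfolding V_def by (rule infinite_super[rotated]) (auto intro: lex_less_trans lex_le_trans2)

definition mfun :: "(bool list \<Rightarrow> nat) \<Rightarrow> (nat \<Rightarrow> bool) \<Rightarrow> nat \<Rightarrow> bool" where
  "mfun h L n = (\<exists>t. length t = Suc n \<and> t!n \<and> U h L (xone t) \<and>
      (\<forall>t'. length t' = Suc n \<and> lex_less (xone t') (xone t) \<longrightarrow> \<not> U h L (xone t')))"
definition Mfun :: "(bool list \<Rightarrow> nat) \<Rightarrow> (nat \<Rightarrow> bool) \<Rightarrow> nat \<Rightarrow> bool" where
  "Mfun h L n = (\<exists>t. length t = Suc n \<and> t!n \<and> V h L (xzero t) \<and>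
      (\<forall>t'. length t' = Suc n \<and> lex_less (xzero t) (xzero t') \<longrightarrow> \<not> V h L (xzero t')))"

lemma pre_nth: "i < k \<Longrightarrow> pre a k ! i = a i" unfolding pre_def by simp

lemma xone_ne: assumes "length t = length t'" "t \<noteq> t'" shows "xone t \<noteq> xone t'"
proof -
  obtain i where "i < length t" "t!i \<noteq> t'!i" using assms nth_equalityI by blast
  then have "xone t i \<noteq> xone t' i" using assms(1) by (simp add: xone_def)
  then show ?thesis by metis
qed
lemma xzero_ne: assumes "length t = length t'" "t \<noteq> t'" shows "xzero t \<noteq> xzero t'"
proof -
  obtain i where "i < length t" "t!i \<noteq> t'!i" using assms nth_equalityI by blast
  then have "xzero t i \<noteq> xzero t' i" using assms(1) by (simp add: xzero_def)
  then show ?thesis by metis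
qed

lemma xone_less_trans: assumes "length t' = length t" "lex_less (xone t') (xone t)"
  "\<forall>i<length t. a i = t ! i" shows "lex_less (xone t') a"
proof -
  obtain d where d: "\<forall>m<d. xone t' m = xone t m" "\<not> xone t' d" "xone t d"
    using assms(2) unfolding lex_less_def by blast
  have dl: "d < length t" using d(2) assms(1) unfolding xone_def by (metis (full_types))
  have "a d" using d(3) dl assms(3) by (simp add: xone_def)
  moreover have "\<forall>m<d. xone t' m = a m" using d(1) dl assms(3) by (simp add: xone_def)
  ultimately show ?thesis using d(2) unfolding lex_less_def by blast
qed

lemma xzero_less_trans: assumes "length t' = length t" "lex_less (xzero t) (xzero t')"
  "\<forall>i<length t. a i = t ! i" shows "lex_less a (xzero t')"
proof -
  obtain d where d: "\<forall>m<d. xzero t m = xzero t' m" "\<not> xzero t d" "xzero t' d"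
    using assms(2) unfolding lex_less_def by blast
  have dl: "d < length t" using d(3) assms(1) unfolding xzero_def by (metis (full_types))
  have "\<not> a d" using d(2) dl assms(3) by (simp add: xzero_def)
  moreover have "\<forall>m<d. a m = xzero t' m" using d(1) dl assms(3) by (simp add: xzero_def)
  ultimately show ?thesis using d(3) unfolding lex_less_def by blast
qed

lemma mfun_eq: assumes Ua: "U h L a" and hyp: "\<forall>t. U h L (xone t) \<longrightarrow> \<not> lex_less (xone t) a"
  shows "mfun h L = a"
proof
  fix n
  let ?t0 = "pre a (Suc n)"
  have ag: "\<forall>i<length ?t0. a i = ?t0 ! i" by (simp add: pre_nth)
  have U0: "U h L (xone ?t0)" using U_up[OF Ua xone_pre_le] .
  have min0: "\<not> U h L (xone t')" if "length t' = Suc n" "lex_less (xone t') (xone ?t0)" for t'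
    using xone_less_trans[of t' ?t0 a] that ag hyp by auto
  show "mfun h L n = a n"
  proof (cases "a n")
    case True
    then show ?thesis unfolding mfun_def using U0 min0 by (intro iffI TrueI exI[of _ ?t0]) (auto simp: pre_nth)
  next
    case False
    have "\<not> mfun h L n"
    proof
      assume "mfun h L n"
      then obtain t where t: "length t = Suc n" "t!n" "U h L (xone t)"
        "\<forall>t'. length t' = Suc n \<and> lex_less (xone t') (xone t) \<longrightarrow> \<not> U h L (xone t')"
        unfolding mfun_def by blast
      have "t \<noteq> ?t0" using t(2) False by (auto simp: pre_nth)
      then have "xone t \<noteq> xone ?t0" using xone_ne t(1) by simp
      then consider "lex_less (xone t) (xone ?t0)" | "lex_less (xone ?t0) (xone t)"
        using lex_trich by blast
      then show False
      proof cases
        case 1 then show False using min0 t(1,3) by blast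
      next
        case 2 then show False using t(4) U0 by simp
      qed
    qed
    then show ?thesis using False by simp
  qed
qed

lemma Mfun_eq: assumes Va: "V h L a" and hyp: "\<forall>t. V h L (xzero t) \<longrightarrow> \<not> lex_less a (xzero t)"
  shows "Mfun h L = a"
proof
  fix n
  let ?t0 = "pre a (Suc n)"
  have ag: "\<forall>i<length ?t0. a i = ?t0 ! i" by (simp add: pre_nth)
  have V0: "V h L (xzero ?t0)" using V_down[OF Va xzero_pre_le] .
  have max0: "\<not> V h L (xzero t')" if "length t' = Suc n" "lex_less (xzero ?t0) (xzero t')" for t'
    using xzero_less_trans[of t' ?t0 a] that ag hyp by auto
  show "Mfun h L n = a n"
  proof (cases "a n")
    case True
    then show ?thesis unfolding Mfun_def using V0 max0 by (intro iffI TrueI exI[of _ ?t0]) (auto simp: pre_nth)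
  next
    case False
    have "\<not> Mfun h L n"
    proof
      assume "Mfun h L n"
      then obtain t where t: "length t = Suc n" "t!n" "V h L (xzero t)"
        "\<forall>t'. length t' = Suc n \<and> lex_less (xzero t) (xzero t') \<longrightarrow> \<not> V h L (xzero t')"
        unfolding Mfun_def by blast
      have "t \<noteq> ?t0" using t(2) False by (auto simp: pre_nth)
      then have "xzero t \<noteq> xzero ?t0" using xzero_ne t(1) by simp
      then consider "lex_less (xzero t) (xzero ?t0)" | "lex_less (xzero ?t0) (xzero t)"
        using lex_trich by blast
      then show False
      proof cases
        case 2 then show False using max0 t(1,3) by blast
      next
        case 1 then show False using t(4) V0 by simp
      qed
    qed
    then show ?thesis using False by simp
  qed
qed

lemma decomp:
  "(\<exists>a\<in>A. U h L a \<and> V h L a) \<longleftrightarrow>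
    (\<exists>t t'. (\<exists>a\<in>A. lex_less (xone t) a \<and> lex_less a (xzero t')) \<and> U h L (xone t) \<and> V h L (xzero t'))
    \<or> (mfun h L \<in> A \<and> U h L (mfun h L) \<and> V h L (mfun h L))
    \<or> (Mfun h L \<in> A \<and> U h L (Mfun h L) \<and> V h L (Mfun h L))" (is "?l \<longleftrightarrow> ?r1 \<or> ?r2 \<or> ?r3")
proof
  assume ?l
  then obtain a where a: "a \<in> A" "U h L a" "V h L a" by blast
  show "?r1 \<or> ?r2 \<or> ?r3"
  proof (cases "\<exists>t. U h L (xone t) \<and> lex_less (xone t) a")
    case c1: True
    show ?thesis
    proof (cases "\<exists>t. V h L (xzero t) \<and> lex_less a (xzero t)")
      case True
      then show ?thesis using c1 a by blast
    next
      case False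
      then have "Mfun h L = a" using Mfun_eq[OF a(3)] by blast
      then show ?thesis using a by blast
    qed
  next
    case False
    then have "mfun h L = a" using mfun_eq[OF a(2)] by blast
    then show ?thesis using a by blast
  qed
next
  assume "?r1 \<or> ?r2 \<or> ?r3"
  then show ?l
  proof (elim disjE)
    assume ?r1
    then obtain t t' a where "a \<in> A" "lex_less (xone t) a" "lex_less a (xzero t')"
      "U h L (xone t)" "V h L (xzero t')" by blast
    then show ?l using U_up V_down unfolding lex_le_def by blast
  qed blast+
qed

lemma infinite_pred: "infinite {n::nat. P n} \<longleftrightarrow> (\<forall>N. \<exists>n\<ge>N. P n)"
  using infinite_nat_iff_unbounded_le[of "{n. P n}"] by simp

lemma lex_less_pred: "lex_less c y \<longleftrightarrow> (\<exists>d. (\<forall>i<d. (c i \<and> y i) \<or> (\<not> c i \<and> \<not> y i)) \<and> \<not> c d \<and> y d)"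
  unfolding lex_less_def by (metis (full_types))

lemma pred_lex1:
  assumes [measurable]: "\<And>i. Measurable.pred borel (\<lambda>L. y L i)"
  shows "Measurable.pred borel (\<lambda>L. lex_less c (y L))"
  unfolding lex_less_pred by measurable

lemma pred_lex2:
  assumes [measurable]: "\<And>i. Measurable.pred borel (\<lambda>L. y L i)"
  shows "Measurable.pred borel (\<lambda>L. lex_less (y L) c)"
  unfolding lex_less_pred by measurable

lemma pred_U:
  assumes "\<And>i. Measurable.pred borel (\<lambda>L. y L i)"
  shows "Measurable.pred borel (\<lambda>L. U h L (y L))"
proof -
  have [measurable]: "\<And>n. Measurable.pred borel (\<lambda>L. lex_less (pt h n) (y L))" by (rule pred_lex1[OF assms])
  show ?thesis unfolding U_def infinite_pred by measurable
qed

lemma pred_V: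
  assumes "\<And>i. Measurable.pred borel (\<lambda>L. y L i)"
  shows "Measurable.pred borel (\<lambda>L. V h L (y L))"
proof -
  have [measurable]: "\<And>n. Measurable.pred borel (\<lambda>L. lex_less (y L) (pt h n))" by (rule pred_lex2[OF assms])
  show ?thesis unfolding V_def infinite_pred by measurable
qed

lemma pred_Uc[measurable]: "Measurable.pred borel (\<lambda>L. U h L c)"
  using pred_U[of "\<lambda>L. c"] by simp
lemma pred_Vc[measurable]: "Measurable.pred borel (\<lambda>L. V h L c)"
  using pred_V[of "\<lambda>L. c"] by simp

lemma pred_mfun[measurable]: "Measurable.pred borel (\<lambda>L. mfun h L n)"
  unfolding mfun_def by measurable
lemma pred_Mfun[measurable]: "Measurable.pred borel (\<lambda>L. Mfun h L n)"
  unfolding Mfun_def by measurable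

lemma pred_inA:
  assumes "y \<in> borel_measurable borel" "A \<in> sets borel"
  shows "Measurable.pred borel (\<lambda>L. y L \<in> A)"
  unfolding pred_def using measurable_sets[OF assms] by (simp add: vimage_def)

lemma part3:
  assumes nev: "\<forall>x\<in>A. \<not> eventually_constant x" and AB: "A \<in> sets borel"
  shows "LA h A \<in> sets borel"
proof -
  have "LA h A = {L. infinite {n. L n}} - {L. \<exists>a\<in>A. U h L a \<and> V h L a}"
    unfolding LA_def infsets_def using conv_iff nev unfolding infsets_def by auto
  also have "\<dots> = {L. \<forall>N. \<exists>n\<ge>N. L n} - {L.
    (\<exists>t t'. (\<exists>a\<in>A. lex_less (xone t) a \<and> lex_less a (xzero t')) \<and> U h L (xone t) \<and> V h L (xzero t'))
    \<or> (mfun h L \<in> A \<and> U h L (mfun h L) \<and> V h L (mfun h L))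
    \<or> (Mfun h L \<in> A \<and> U h L (Mfun h L) \<and> V h L (Mfun h L))}"
    unfolding decomp infinite_pred ..
  also have "\<dots> \<in> sets borel"
  proof -
    have m1[measurable]: "mfun h \<in> borel_measurable borel" by (rule meas_coord) simp
    have m2[measurable]: "Mfun h \<in> borel_measurable borel" by (rule meas_coord) simp
    have [measurable]: "Measurable.pred borel (\<lambda>L. mfun h L \<in> A)" by (rule pred_inA[OF m1 AB])
    have [measurable]: "Measurable.pred borel (\<lambda>L. Mfun h L \<in> A)" by (rule pred_inA[OF m2 AB])
    have [measurable]: "Measurable.pred borel (\<lambda>L. U h L (mfun h L))" by (rule pred_U) simp
    have [measurable]: "Measurable.pred borel (\<lambda>L. V h L (mfun h L))" by (rule pred_V) simp
    have [measurable]: "Measurable.pred borel (\<lambda>L. U h L (Mfun h L))" by (rule pred_U) simp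
    have [measurable]: "Measurable.pred borel (\<lambda>L. V h L (Mfun h L))" by (rule pred_V) simp
    show ?thesis by measurable
  qed
  finally show ?thesis .
qed



primrec spos :: "(nat \<Rightarrow> nat) \<Rightarrow> nat \<Rightarrow> nat" where
  "spos g 0 = g 0"
| "spos g (Suc k) = spos g k + g (Suc k) + 1"

lemma spos_mono: "strict_mono (spos g)"
  unfolding strict_mono_Suc_iff by simp

definition setof :: "(nat \<Rightarrow> nat) \<Rightarrow> nat \<Rightarrow> bool" where
  "setof g n = (\<exists>k\<le>n. spos g k = n)"

lemma setof_range: "setof g n \<longleftrightarrow> n \<in> range (spos g)"
  unfolding setof_def using strict_mono_imp_increasing[OF spos_mono] by auto

lemma setof_inf: "infinite {n. setof g n}"
proof -
  have "range (spos g) \<subseteq> {n. setof g n}" using setof_range by auto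
  moreover have "inj (spos g)" using spos_mono strict_mono_imp_inj_on by blast
  ultimately show ?thesis using infinite_iff_countable_subset by blast
qed

lemma spos_local: "(\<forall>i\<le>k. g i = g' i) \<Longrightarrow> spos g k = spos g' k"
  by (induction k) auto

lemma setof_local: assumes "\<forall>i\<le>k. g i = g' i" shows "setof g k = setof g' k"
proof -
  have sp: "spos g j = spos g' j" if "j \<le> k" for j using assms that by (intro spos_local) auto
  show ?thesis unfolding setof_def
  proof
    assume "\<exists>j\<le>k. spos g j = k"
    then obtain j where "j \<le> k" "spos g j = k" by blast
    then show "\<exists>j\<le>k. spos g' j = k" using sp by metis
  next
    assume "\<exists>j\<le>k. spos g' j = k"
    then obtain j where "j \<le> k" "spos g' j = k" by blast
    then show "\<exists>j\<le>k. spos g j = k" using sp by metis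
  qed
qed

lemma setof_surj: assumes S: "infinite S" shows "\<exists>g. \<forall>n. setof g n \<longleftrightarrow> n \<in> S"
proof -
  define g where "g k = (if k = 0 then enumerate S 0 else enumerate S k - enumerate S (k - 1) - 1)" for k
  have sp: "spos g k = enumerate S k" for k
  proof (induction k)
    case 0 then show ?case by (simp add: g_def)
  next
    case (Suc k)
    have "enumerate S k < enumerate S (Suc k)" by (rule enumerate_step[OF S])
    then show ?case using Suc by (simp add: g_def)
  qed
  have "setof g n \<longleftrightarrow> n \<in> S" for n
    unfolding setof_range sp using enumerate_in_set[OF S] enumerate_Ex[OF S] by blast
  then show ?thesis by blast
qed

definition cnt :: "(nat \<Rightarrow> bool) \<Rightarrow> nat \<Rightarrow> nat" where
  "cnt v n = card {m. m < n \<and> v m}"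

lemma cnt_le: "cnt v n \<le> n"
proof -
  have "card {m. m < n \<and> v m} \<le> card {..<n}" by (rule card_mono) auto
  then show ?thesis unfolding cnt_def by simp
qed

lemma cnt_local: "(\<forall>m<n. v m = v' m) \<Longrightarrow> cnt v n = cnt v' n"
  unfolding cnt_def by (rule arg_cong[where f = card]) auto

lemma cnt_enum: assumes S: "infinite {m. v m}" shows "cnt v (enumerate {m. v m} k) = k"
proof -
  let ?E = "enumerate {m. v m}"
  have "{m. m < ?E k \<and> v m} = ?E ` {..<k}"
  proof (intro equalityI subsetI)
    fix m assume m: "m \<in> {m. m < ?E k \<and> v m}"
    then obtain j where j: "?E j = m" using enumerate_Ex[OF S] by blast
    then have "j < k" using m enumerate_mono_iff[OF S] by auto
    then show "m \<in> ?E ` {..<k}" using j by auto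
  next
    fix m assume "m \<in> ?E ` {..<k}"
    then obtain j where "j < k" "m = ?E j" by auto
    then show "m \<in> {m. m < ?E k \<and> v m}" using enumerate_mono[OF _ S] enumerate_in_set[OF S] by auto
  qed
  moreover have "card (?E ` {..<k}) = k"
    using card_image[OF inj_on_subset[OF inj_enumerate[OF S]]] by simp
  ultimately show ?thesis unfolding cnt_def by simp
qed

lemma enum_cnt: assumes S: "infinite {m. v m}" and "v n" shows "enumerate {m. v m} (cnt v n) = n"
proof -
  obtain j where "enumerate {m. v m} j = n" using enumerate_Ex[OF S] assms(2) by blast
  then show ?thesis using cnt_enum[OF S, of j] by simp
qed

definition wz :: "(nat \<Rightarrow> nat) \<Rightarrow> nat \<Rightarrow> nat" where "wz z = (\<lambda>i. z (3*i))"
definition z1 :: "(nat \<Rightarrow> nat) \<Rightarrow> nat \<Rightarrow> nat" where "z1 z = (\<lambda>i. z (3*i+1))"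
definition z2 :: "(nat \<Rightarrow> nat) \<Rightarrow> nat \<Rightarrow> nat" where "z2 z = (\<lambda>i. z (3*i+2))"

definition vl :: "(bool list \<Rightarrow> nat) \<Rightarrow> ((nat \<Rightarrow> nat) \<Rightarrow> nat \<Rightarrow> bool) \<Rightarrow> (nat \<Rightarrow> nat) \<Rightarrow> nat \<Rightarrow> bool" where
  "vl h f z n \<longleftrightarrow> fseq h n (f (wz z)) = 1"

definition Phi :: "(bool list \<Rightarrow> nat) \<Rightarrow> ((nat \<Rightarrow> nat) \<Rightarrow> nat \<Rightarrow> bool) \<Rightarrow> (nat \<Rightarrow> nat) \<Rightarrow> nat \<Rightarrow> bool" where
  "Phi h f z n = (if vl h f z n then setof (z1 z) (cnt (vl h f z) n)
                  else setof (z2 z) (cnt (\<lambda>m. \<not> vl h f z m) n))"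

lemma fseq01: "fseq h n a = 0 \<or> fseq h n a = 1"
  unfolding fseq_def Let_def fplus_def fminus_def by auto

lemma fseq_loc: assumes "\<not> eventually_constant a"
  shows "\<exists>N. \<forall>b. (\<forall>i<N. b i = a i) \<longrightarrow> fseq h m b = fseq h m a"
proof -
  have ne: "a \<noteq> pt h m" using evc_pt assms by metis
  show ?thesis
  proof (intro exI[of _ "Suc (fdiff a (pt h m))"] allI impI)
    fix b assume "\<forall>i<Suc (fdiff a (pt h m)). b i = a i"
    then have "\<forall>i\<le>fdiff a (pt h m). b i = a i" by auto
    note c = cyl_lex[OF ne this]
    have "pt h m \<noteq> b" using c(1) by metis
    then show "fseq h m b = fseq h m a"
      using fseq_pt'[of h m b] fseq_pt'[of h m a] ne c(3) by metis
  qed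
qed

lemma mod3[simp]: "(3*i) div 3 = i" "(3*i) mod 3 = 0" "Suc (3*i) div 3 = i" "Suc (3*i) mod 3 = 1"
  "Suc (Suc (3*i)) div 3 = i" "Suc (Suc (3*i)) mod 3 = 2"
  by presburger+

context
  fixes h :: "bool list \<Rightarrow> nat" and f :: "(nat \<Rightarrow> nat) \<Rightarrow> nat \<Rightarrow> bool"
  assumes bh: "bij h" and fc: "continuous_on UNIV f" and nev: "\<And>w. \<not> eventually_constant (f w)"
begin

lemma inf1: assumes "\<not> eventually_constant a" shows "infinite {n. fseq h n a = 1}"
proof -
  have "range (\<lambda>k. 4 * h (pre a k) + 0) \<subseteq> {n. fseq h n a = 1}"
    using xzero_pre_le by (auto simp: fseq_4 ih[OF bh] fplus_def)
  then show ?thesis using inj_h4[OF bh] infinite_iff_countable_subset by blast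
qed

lemma inf0: assumes "\<not> eventually_constant a" shows "infinite {n. \<not> fseq h n a = 1}"
proof -
  have "fseq h (4 * h (pre a k) + 1) a \<noteq> 1" for k
  proof -
    have l: "lex_less a (xone (pre a k))" using xone_pre_less[OF assms] by blast
    have "xone (pre a k) \<noteq> a" using l lex_less_irrefl by force
    moreover have "\<not> lex_less (xone (pre a k)) a" using l lex_less_asym by blast
    ultimately have "\<not> lex_le (xone (pre a k)) a" unfolding lex_le_def by blast
    then show ?thesis by (simp add: fseq_4 ih[OF bh] fplus_def)
  qed
  then have "range (\<lambda>k. 4 * h (pre a k) + 1) \<subseteq> {n. \<not> fseq h n a = 1}" by auto
  then show ?thesis using inj_h4[OF bh] infinite_iff_countable_subset by blast
qed

lemma Phi_good:
  "Phi h f z \<in> infsets \<and> \<not> convergent (\<lambda>k. fseq h (enumerate {n. Phi h f z n} k) (f (wz z)))"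
proof -
  let ?a = "f (wz z)"
  let ?v = "vl h f z"
  have P1: "infinite {m. ?v m}" using inf1[OF nev] unfolding vl_def by simp
  have P0: "infinite {m. \<not> ?v m}" using inf0[OF nev] unfolding vl_def by simp
  let ?E1 = "enumerate {m. ?v m}" and ?E0 = "enumerate {m. \<not> ?v m}"
  have s1: "?E1 ` {k. setof (z1 z) k} \<subseteq> {n \<in> {n. Phi h f z n}. fseq h n ?a = 1}"
  proof
    fix n assume "n \<in> ?E1 ` {k. setof (z1 z) k}"
    then obtain k where k: "setof (z1 z) k" "n = ?E1 k" by auto
    have vn: "?v n" using k(2) enumerate_in_set[OF P1] by auto
    have "cnt ?v n = k" using k(2) cnt_enum[OF P1] by simp
    then show "n \<in> {n \<in> {n. Phi h f z n}. fseq h n ?a = 1}" using vn k(1) unfolding Phi_def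
      by (simp add: vl_def)
  qed
  have s0: "?E0 ` {k. setof (z2 z) k} \<subseteq> {n \<in> {n. Phi h f z n}. fseq h n ?a = 0}"
  proof
    fix n assume "n \<in> ?E0 ` {k. setof (z2 z) k}"
    then obtain k where k: "setof (z2 z) k" "n = ?E0 k" by auto
    have vn: "\<not> ?v n" using k(2) enumerate_in_set[OF P0] by auto
    have "cnt (\<lambda>m. \<not> ?v m) n = k" using k(2) cnt_enum[OF P0] by simp
    moreover have "fseq h n ?a = 0" using vn fseq01[of h n ?a] unfolding vl_def by auto
    ultimately show "n \<in> {n \<in> {n. Phi h f z n}. fseq h n ?a = 0}" using vn k(1) unfolding Phi_def
      by simp
  qed
  have fi1: "infinite (?E1 ` {k. setof (z1 z) k})"
  proof
    assume "finite (?E1 ` {k. setof (z1 z) k})"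
    then have "finite {k. setof (z1 z) k}"
      by (rule finite_imageD) (rule inj_on_subset[OF inj_enumerate[OF P1]], simp)
    with setof_inf show False by blast
  qed
  have i1: "infinite {n \<in> {n. Phi h f z n}. fseq h n ?a = 1}"
    by (rule infinite_super[OF s1 fi1])
  have fi0: "infinite (?E0 ` {k. setof (z2 z) k})"
  proof
    assume "finite (?E0 ` {k. setof (z2 z) k})"
    then have "finite {k. setof (z2 z) k}"
      by (rule finite_imageD) (rule inj_on_subset[OF inj_enumerate[OF P0]], simp)
    with setof_inf show False by blast
  qed
  have i0: "infinite {n \<in> {n. Phi h f z n}. fseq h n ?a = 0}"
    by (rule infinite_super[OF s0 fi0])
  have S: "infinite {n. Phi h f z n}" by (rule infinite_super[OF _ i1]) blast
  show ?thesis using nonconv[OF S i1 i0] S unfolding infsets_def by simp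
qed

lemma Phi_onto:
  assumes L: "L \<in> infsets" and nc: "\<not> convergent (\<lambda>k. fseq h (enumerate {n. L n} k) (f w0))"
  shows "\<exists>z. Phi h f z = L"
proof -
  let ?a = "f w0"
  let ?v = "\<lambda>n. fseq h n ?a = 1"
  have uv: "U h L ?a \<and> V h L ?a" using conv_iff[OF L nev] nc by blast
  have e1: "{n. L n \<and> lex_less (pt h n) ?a} = {n. L n \<and> ?v n}" using fseq_pt[OF nev] by auto
  have e0: "{n. L n \<and> lex_less ?a (pt h n)} \<subseteq> {n. L n \<and> \<not> ?v n}"
    using fseq_pt[OF nev] lex_less_asym by fastforce
  have LP1: "infinite {n. L n \<and> ?v n}" using uv e1 unfolding U_def by simp
  have LP0: "infinite {n. L n \<and> \<not> ?v n}" using uv infinite_super[OF e0] unfolding V_def by blast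
  have P1: "infinite {m. ?v m}" using inf1[OF nev] .
  have P0: "infinite {m. \<not> ?v m}" using inf0[OF nev] .
  let ?E1 = "enumerate {m. ?v m}" and ?E0 = "enumerate {m. \<not> ?v m}"
  define X where "X = {k. L (?E1 k)}"
  define Y where "Y = {k. L (?E0 k)}"
  have "{n. L n \<and> ?v n} \<subseteq> ?E1 ` X"
  proof
    fix n assume n: "n \<in> {n. L n \<and> ?v n}"
    then have "?E1 (cnt ?v n) = n" using enum_cnt[OF P1] by auto
    then show "n \<in> ?E1 ` X" unfolding X_def using n by (metis (mono_tags) image_eqI mem_Collect_eq)
  qed
  then have iX: "infinite X" using LP1 infinite_super by blast
  have "{n. L n \<and> \<not> ?v n} \<subseteq> ?E0 ` Y"
  proof
    fix n assume n: "n \<in> {n. L n \<and> \<not> ?v n}"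
    then have "?E0 (cnt (\<lambda>m. \<not> ?v m) n) = n" using enum_cnt[OF P0] by auto
    then show "n \<in> ?E0 ` Y" unfolding Y_def using n by (metis (mono_tags) image_eqI mem_Collect_eq)
  qed
  then have iY: "infinite Y" using LP0 infinite_super by blast
  obtain g1 where g1: "\<And>n. setof g1 n \<longleftrightarrow> n \<in> X" using setof_surj[OF iX] by blast
  obtain g2 where g2: "\<And>n. setof g2 n \<longleftrightarrow> n \<in> Y" using setof_surj[OF iY] by blast
  define z where "z j = (if j mod 3 = 0 then w0 (j div 3) else if j mod 3 = 1 then g1 (j div 3) else g2 (j div 3))" for j
  have zw: "wz z = w0" unfolding wz_def z_def by simp
  have zz1: "z1 z = g1" unfolding z1_def z_def by simp
  have zz2: "z2 z = g2" unfolding z2_def z_def by simp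
  have vv: "vl h f z = ?v" unfolding vl_def zw by simp
  have "Phi h f z n = L n" for n
  proof (cases "?v n")
    case True
    have "Phi h f z n = (cnt ?v n \<in> X)" unfolding Phi_def vv zz1 g1 using True by simp
    also have "\<dots> = L n" unfolding X_def using enum_cnt[OF P1 True] by simp
    finally show ?thesis .
  next
    case False
    have "Phi h f z n = (cnt (\<lambda>m. \<not> ?v m) n \<in> Y)" unfolding Phi_def vv zz2 g2 using False by simp
    also have "\<dots> = L n" unfolding Y_def using enum_cnt[OF P0, of n] False by simp
    finally show ?thesis .
  qed
  then show ?thesis by blast
qed

lemma Phi_cont: "continuous_on UNIV (Phi h f)"
proof (rule continuous_on_coordinatewise_then_product, rule lc_cont)
  fix n z
  let ?a = "f (wz z)"
  have "\<forall>m. \<exists>N. \<forall>b. (\<forall>i<N. b i = ?a i) \<longrightarrow> fseq h m b = fseq h m ?a"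
    using fseq_loc[OF nev] by blast
  then obtain Nf where Nf: "\<And>m b. (\<forall>i<Nf m. b i = ?a i) \<Longrightarrow> fseq h m b = fseq h m ?a"
    using choice by metis
  have cw: "continuous_on UNIV wz" unfolding wz_def
    by (intro continuous_on_coordinatewise_then_product) simp
  have cfw: "continuous_on UNIV (\<lambda>z. f (wz z))"
    by (rule continuous_on_compose2[OF fc cw]) simp
  define W where "W = {z'. \<forall>j<3*n+3. z' j = z j} \<inter> (\<Inter>m\<in>{..n}. (\<lambda>z. f (wz z)) -` {b. \<forall>i<Nf m. b i = ?a i})"
  have oW: "open W" unfolding W_def
    by (intro open_Int open_cyl open_INT finite_atMost ballI open_vimage[OF open_cyl cfw])
  have zW: "z \<in> W" unfolding W_def by simp
  have "Phi h f z' n = Phi h f z n" if z': "z' \<in> W" for z'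
  proof -
    have vm: "vl h f z' m = vl h f z m" if "m \<le> n" for m
    proof -
      have "\<forall>i<Nf m. f (wz z') i = ?a i" using z' that unfolding W_def by auto
      then show ?thesis unfolding vl_def using Nf by metis
    qed
    have c1: "cnt (vl h f z') n = cnt (vl h f z) n" using vm by (intro cnt_local) auto
    have c0: "cnt (\<lambda>m. \<not> vl h f z' m) n = cnt (\<lambda>m. \<not> vl h f z m) n" using vm by (intro cnt_local) auto
    have a1: "\<forall>i\<le>n. z1 z' i = z1 z i" using z' unfolding W_def z1_def by auto
    have a2: "\<forall>i\<le>n. z2 z' i = z2 z i" using z' unfolding W_def z2_def by auto
    have s1: "setof (z1 z') (cnt (vl h f z) n) = setof (z1 z) (cnt (vl h f z) n)"
      using a1 cnt_le[of "vl h f z" n] by (intro setof_local) auto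
    have s0: "setof (z2 z') (cnt (\<lambda>m. \<not> vl h f z m) n) = setof (z2 z) (cnt (\<lambda>m. \<not> vl h f z m) n)"
      using a2 cnt_le[of "\<lambda>m. \<not> vl h f z m" n] by (intro setof_local) auto
    show ?thesis unfolding Phi_def using vm[of n] c1 c0 s1 s0 by simp
  qed
  then show "\<exists>U. open U \<and> z \<in> U \<and> (\<forall>y\<in>U. Phi h f y n = Phi h f z n)" using oW zW by blast
qed

end

lemma analytic_compl:
  assumes bh: "bij h" and an: "analytic A" and nev: "\<forall>x\<in>A. \<not> eventually_constant x"
  shows "analytic (infsets - LA h A)"
proof (cases "A = {}")
  case True
  then have "infsets - LA h A = {}" unfolding LA_def by auto
  then show ?thesis unfolding analytic_def by simp
next
  case False
  then obtain f :: "(nat \<Rightarrow> nat) \<Rightarrow> nat \<Rightarrow> bool" where fc: "continuous_on UNIV f" and rf: "range f = A"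
    using an unfolding analytic_def by blast
  have nev': "\<And>w. \<not> eventually_constant (f w)" using nev rf by auto
  have "range (Phi h f) = infsets - LA h A"
  proof (intro equalityI subsetI)
    fix L assume "L \<in> range (Phi h f)"
    then obtain z where z: "L = Phi h f z" by auto
    have "f (wz z) \<in> A" using rf by auto
    then show "L \<in> infsets - LA h A" using Phi_good[OF bh fc nev', of z] z unfolding LA_def by auto
  next
    fix L assume L: "L \<in> infsets - LA h A"
    then obtain a where "a \<in> A" "\<not> convergent (\<lambda>k. fseq h (enumerate {n. L n} k) a)"
      unfolding LA_def by auto
    moreover then obtain w0 where "a = f w0" using rf by auto
    ultimately show "L \<in> range (Phi h f)" using Phi_onto[OF bh fc nev', of L w0] L by auto
  qed
  then show ?thesis unfolding analytic_def using Phi_cont[OF bh fc nev'] by blast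
qed


theorem proposition5p5:
  fixes h :: "bool list \<Rightarrow> nat" and A :: "(nat \<Rightarrow> bool) set"
  assumes "bij h"
    and "\<And>s t. length s < length t \<Longrightarrow> h s < h t"
    and "analytic A"
    and "\<forall>x\<in>A. \<not> eventually_constant x"
  shows "(\<exists>H :: (nat \<Rightarrow> bool) \<Rightarrow> (nat \<Rightarrow> bool).
            continuous_on UNIV H \<and> (\<forall>x. H x \<in> infsets) \<and> H -` LA h A = - A)
       \<and> (sigma11_complete TYPE('b::polish_space) A \<longrightarrow> pi11_complete TYPE('b) infsets (LA h A))
       \<and> (A \<in> sets borel \<longrightarrow> LA h A \<in> sets borel)"
proof -
  have p1: "continuous_on UNIV (Hmap h) \<and> (\<forall>x. Hmap h x \<in> infsets) \<and> Hmap h -` LA h A = - A"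
    by (rule part1[OF assms(1) assms(4)])
  have P1': "\<exists>H :: (nat \<Rightarrow> bool) \<Rightarrow> (nat \<Rightarrow> bool).
            continuous_on UNIV H \<and> (\<forall>x. H x \<in> infsets) \<and> H -` LA h A = - A"
    using p1 by blast
  have P2': "sigma11_complete TYPE('b::polish_space) A \<longrightarrow> pi11_complete TYPE('b) infsets (LA h A)"
  proof
    assume sc: "sigma11_complete TYPE('b) A"
    show "pi11_complete TYPE('b) infsets (LA h A)" unfolding pi11_complete_def
    proof (intro conjI allI impI)
      show "LA h A \<subseteq> infsets" unfolding LA_def by auto
      show "analytic (infsets - LA h A)" by (rule analytic_compl[OF assms(1) assms(3) assms(4)])
      fix B :: "'b set" assume "analytic (- B)"
      then obtain g :: "'b \<Rightarrow> nat \<Rightarrow> bool" where g: "g \<in> borel_measurable borel" "g -` A = - B"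
        using sc unfolding sigma11_complete_def by blast
      show "\<exists>f. f \<in> borel_measurable borel \<and> (\<forall>y. f y \<in> infsets) \<and> f -` LA h A = B"
      proof (intro exI[of _ "\<lambda>y. Hmap h (g y)"] conjI allI)
        show "(\<lambda>y. Hmap h (g y)) \<in> borel_measurable borel"
          using measurable_comp[OF g(1) borel_measurable_continuous_onI[OF Hmap_cont]]
          by (simp add: comp_def)
        show "Hmap h (g y) \<in> infsets" for y by (rule Hmap_inf[OF assms(1)])
        have "(\<lambda>y. Hmap h (g y)) -` LA h A = g -` (Hmap h -` LA h A)" by auto
        also have "\<dots> = g -` (- A)" using p1 by simp
        also have "\<dots> = B" using g(2) by auto
        finally show "(\<lambda>y. Hmap h (g y)) -` LA h A = B" .
      qed
    qed
  qed
  have P3': "A \<in> sets borel \<longrightarrow> LA h A \<in> sets borel" using part3[OF assms(4)] by blast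
  show ?thesis using P1' P2' P3' by blast
qed

end
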